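(* There exist graphs $G,H$ embedded in $\mathbb{R}^2$, each equipped with the height filtration, such that the FB-persistence diagrams of $G$ and $H$ differ, but the extended persistence diagrams of $G$ and $H$ coincide (in degrees $0$ and $1$).
   Context: Graphs are finite, undirected, possibly with multi-edges. For a graph embedded in $\mathbb{R}^2$, the height filtration is the vertex-based filtration function $f(v)=$ $y$-coordinate of $v$, $f(e)=\max(f(v),f(w))$ for $e=(v,w)$. For a filtration function $f$ with distinct values $a_0<\dots<a_n$, $G_{-1}=\emptyset$, $G_i=f^{-1}((-\infty,a_i])$; the intermediate complex $\mathrm{IC}_i(G,f)$ is the subgraph consisting of the vertices and edges of $G_i\setminus G_{i-1}$ together with endpoints of those edges. FB-persistence: the persistence diagrams (from the interval decomposition of $H_k(-;\mathbb{Z}/2)$, indexed by position) of $G_0\subset\dots\subset G_n=G\to Z_1\to\dots\to Z_{n+1}=\text{point}$, where $Z_1=G/\mathrm{IC}_n$ and $Z_{j+1}=Z_j/( *_j\cup\mathrm{IC}_{n-j})$, $*_j$ being the point to which previously contracted pieces were collapsed. Extended persistence: regard $G$ as a topological space and extend $f$ linearly along edges; set $G_a=\{x: f(x)\le a\}$, $G^a=\{x:f(x)\ge a\}$; the extended persistence diagrams are the persistence diagrams of $0\to H_k(G_{a_0})\to\dots\to H_k(G_{a_n})=H_k(G)\to H_k(G,G^{a_n})\to\dots\to H_k(G,G^{a_0})$ (maps induced by inclusions of spaces and pairs), $k=0,1$, with $\mathbb{Z}/2$ coefficients. *)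

theory Defs
  imports "HOL-Analysis.Analysis" "HOL-Library.Z2" "HOL-Library.Function_Algebras"
begin

section \<open>Finite graphs (multigraphs) and Z/2 cellular homology\<close>

text \<open>A finite undirected (multi)graph: vertex set, edge set, and the two endpoints of
  each edge.  The orientation of src/tgt is irrelevant since coefficients are Z/2.\<close>

record ('v,'e) graph =
  gV :: "'v set"
  gE :: "'e set"
  gsrc :: "'e \<Rightarrow> 'v"
  gtgt :: "'e \<Rightarrow> 'v"

definition wf_graph :: "('v,'e) graph \<Rightarrow> bool" where
  "wf_graph X \<longleftrightarrow> finite (gV X) \<and> finite (gE X) \<and>
     (\<forall>e\<in>gE X. gsrc X e \<in> gV X \<and> gtgt X e \<in> gV X)"

text \<open>A pair (X, L): a graph X together with a subgraph L given by its vertex and edge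
  sets.  Absolute homology of X is the case L = empty.\<close>

type_synonym ('v,'e) gpair = "('v,'e) graph \<times> 'v set \<times> 'e set"

definition pgraph :: "('v,'e) gpair \<Rightarrow> ('v,'e) graph" where "pgraph P = fst P"
definition pLV :: "('v,'e) gpair \<Rightarrow> 'v set" where "pLV P = fst (snd P)"
definition pLE :: "('v,'e) gpair \<Rightarrow> 'e set" where "pLE P = snd (snd P)"

definition z2scale :: "bit \<Rightarrow> ('c \<Rightarrow> bit) \<Rightarrow> ('c \<Rightarrow> bit)" where
  "z2scale a f = (\<lambda>x. a * f x)"

definition z2dim :: "('c \<Rightarrow> bit) set \<Rightarrow> nat" where
  "z2dim S = vector_space.dim z2scale S"

definition chains0 :: "('v,'e) gpair \<Rightarrow> ('v \<Rightarrow> bit) set" where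
  "chains0 P = {c. \<forall>v. c v \<noteq> 0 \<longrightarrow> v \<in> gV (pgraph P) - pLV P}"

definition chains1 :: "('v,'e) gpair \<Rightarrow> ('e \<Rightarrow> bit) set" where
  "chains1 P = {c. \<forall>e. c e \<noteq> 0 \<longrightarrow> e \<in> gE (pgraph P) - pLE P}"

definition incid :: "('v,'e) graph \<Rightarrow> 'v \<Rightarrow> 'e \<Rightarrow> bit" where
  "incid X v e = (if gsrc X e = v then 1 else 0) + (if gtgt X e = v then 1 else 0)"

definition bdry :: "('v,'e) gpair \<Rightarrow> ('e \<Rightarrow> bit) \<Rightarrow> ('v \<Rightarrow> bit)" where
  "bdry P c = (\<lambda>v. if v \<in> gV (pgraph P) - pLV P
                   then (\<Sum>e\<in>gE (pgraph P). c e * incid (pgraph P) v e) else 0)"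

text \<open>Cycles and boundaries (there are no 2-cells, so B_1 = 0 and Z_0 = C_0).\<close>

definition cycles0 :: "('v,'e) gpair \<Rightarrow> ('v \<Rightarrow> bit) set" where
  "cycles0 P = chains0 P"
definition bounds0 :: "('v,'e) gpair \<Rightarrow> ('v \<Rightarrow> bit) set" where
  "bounds0 P = bdry P ` chains1 P"
definition cycles1 :: "('v,'e) gpair \<Rightarrow> ('e \<Rightarrow> bit) set" where
  "cycles1 P = {c \<in> chains1 P. bdry P c = 0}"
definition bounds1 :: "('v,'e) gpair \<Rightarrow> ('e \<Rightarrow> bit) set" where
  "bounds1 P = {0}"

text \<open>A cellular map of graphs: a vertex map and an edge map, where an edge is either sent
  to an edge (Some) or collapsed to a vertex (None).  Induced chain maps between pairs.\<close>

type_synonym ('v,'e) cmap = "('v \<Rightarrow> 'v) \<times> ('e \<Rightarrow> 'e option)"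

definition chainmap0 :: "('v,'e) gpair \<Rightarrow> ('v,'e) gpair \<Rightarrow> ('v,'e) cmap
    \<Rightarrow> ('v \<Rightarrow> bit) \<Rightarrow> ('v \<Rightarrow> bit)" where
  "chainmap0 P Q m c = (\<lambda>w. if w \<in> gV (pgraph Q) - pLV Q
      then (\<Sum>v\<in>gV (pgraph P). if fst m v = w then c v else 0) else 0)"

definition chainmap1 :: "('v,'e) gpair \<Rightarrow> ('v,'e) gpair \<Rightarrow> ('v,'e) cmap
    \<Rightarrow> ('e \<Rightarrow> bit) \<Rightarrow> ('e \<Rightarrow> bit)" where
  "chainmap1 P Q m c = (\<lambda>e'. if e' \<in> gE (pgraph Q) - pLE Q
      then (\<Sum>e\<in>gE (pgraph P). if snd m e = Some e' then c e else 0) else 0)"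

fun compmap0 :: "(nat \<Rightarrow> ('v,'e) gpair) \<Rightarrow> (nat \<Rightarrow> ('v,'e) cmap) \<Rightarrow> nat \<Rightarrow> nat
    \<Rightarrow> ('v \<Rightarrow> bit) \<Rightarrow> ('v \<Rightarrow> bit)" where
  "compmap0 sp mp i 0 = id"
| "compmap0 sp mp i (Suc d) =
     chainmap0 (sp (i + d)) (sp (i + d + 1)) (mp (i + d)) \<circ> compmap0 sp mp i d"

fun compmap1 :: "(nat \<Rightarrow> ('v,'e) gpair) \<Rightarrow> (nat \<Rightarrow> ('v,'e) cmap) \<Rightarrow> nat \<Rightarrow> nat
    \<Rightarrow> ('e \<Rightarrow> bit) \<Rightarrow> ('e \<Rightarrow> bit)" where
  "compmap1 sp mp i 0 = id"
| "compmap1 sp mp i (Suc d) =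
     chainmap1 (sp (i + d)) (sp (i + d + 1)) (mp (i + d)) \<circ> compmap1 sp mp i d"

text \<open>Rank of the induced map H_k(sp i) \<rightarrow> H_k(sp j) (i \<le> j), with Z/2 coefficients:
  the dimension of (image of cycles + boundaries) / boundaries in the target.
  Homology vanishes in degrees \<ge> 2.\<close>

definition hrank :: "nat \<Rightarrow> (nat \<Rightarrow> ('v,'e) gpair) \<Rightarrow> (nat \<Rightarrow> ('v,'e) cmap)
    \<Rightarrow> nat \<Rightarrow> nat \<Rightarrow> nat" where
  "hrank k sp mp i j =
    (if k = 0 then
       z2dim (compmap0 sp mp i (j - i) ` cycles0 (sp i) \<union> bounds0 (sp j)) - z2dim (bounds0 (sp j))
     else if k = 1 then
       z2dim (compmap1 sp mp i (j - i) ` cycles1 (sp i) \<union> bounds1 (sp j)) - z2dim (bounds1 (sp j))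
     else 0)"

text \<open>Persistence diagram of the persistence module H_k(sp 0) \<rightarrow> ... \<rightarrow> H_k(sp N),
  indexed by position: the multiplicity of the interval [b,d] (0 \<le> b \<le> d \<le> N) in
  the interval decomposition, given by the rank (inclusion-exclusion) formula
  r(b,d) - r(b-1,d) - r(b,d+1) + r(b-1,d+1), out-of-range ranks being 0.\<close>

definition rk_ext :: "nat \<Rightarrow> (nat \<Rightarrow> ('v,'e) gpair) \<Rightarrow> (nat \<Rightarrow> ('v,'e) cmap) \<Rightarrow> nat
    \<Rightarrow> int \<Rightarrow> int \<Rightarrow> int" where
  "rk_ext k sp mp N i j =
     (if 0 \<le> i \<and> i \<le> j \<and> j \<le> int N then int (hrank k sp mp (nat i) (nat j)) else 0)"

definition pers_diagram :: "nat \<Rightarrow> (nat \<Rightarrow> ('v,'e) gpair) \<Rightarrow> (nat \<Rightarrow> ('v,'e) cmap) \<Rightarrow> nat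
    \<Rightarrow> nat \<times> nat \<Rightarrow> int" where
  "pers_diagram k sp mp N = (\<lambda>(b,d).
     if b \<le> d \<and> d \<le> N then
       rk_ext k sp mp N (int b) (int d) - rk_ext k sp mp N (int b - 1) (int d)
       - rk_ext k sp mp N (int b) (int d + 1) + rk_ext k sp mp N (int b - 1) (int d + 1)
     else 0)"

section \<open>Graphs embedded in the plane and the height filtration\<close>

definition embedding :: "('v,'e) graph \<Rightarrow> ('v \<Rightarrow> real \<times> real) \<Rightarrow> ('e \<Rightarrow> real \<Rightarrow> real \<times> real) \<Rightarrow> bool" where
  "embedding X pos arcs \<longleftrightarrow> wf_graph X \<and> gV X \<noteq> {} \<and> inj_on pos (gV X) \<and>
     (\<forall>e\<in>gE X. arc (arcs e) \<and> pathstart (arcs e) = pos (gsrc X e)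
                            \<and> pathfinish (arcs e) = pos (gtgt X e)) \<and>
     (\<forall>e\<in>gE X. \<forall>v\<in>gV X. pos v \<in> path_image (arcs e) \<longrightarrow> v = gsrc X e \<or> v = gtgt X e) \<and>
     (\<forall>e\<in>gE X. \<forall>e'\<in>gE X. e \<noteq> e' \<longrightarrow>
         path_image (arcs e) \<inter> path_image (arcs e') \<subseteq> pos ` gV X)"

definition hv :: "('v \<Rightarrow> real \<times> real) \<Rightarrow> 'v \<Rightarrow> real" where
  "hv pos v = snd (pos v)"

definition he :: "('v,'e) graph \<Rightarrow> ('v \<Rightarrow> real \<times> real) \<Rightarrow> 'e \<Rightarrow> real" where
  "he X pos e = max (hv pos (gsrc X e)) (hv pos (gtgt X e))"

definition fvals :: "('v,'e) graph \<Rightarrow> ('v \<Rightarrow> real \<times> real) \<Rightarrow> real list" where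
  "fvals X pos = sorted_list_of_set (hv pos ` gV X \<union> he X pos ` gE X)"

definition nlev :: "('v,'e) graph \<Rightarrow> ('v \<Rightarrow> real \<times> real) \<Rightarrow> nat" where
  "nlev X pos = length (fvals X pos) - 1"

definition aval :: "('v,'e) graph \<Rightarrow> ('v \<Rightarrow> real \<times> real) \<Rightarrow> nat \<Rightarrow> real" where
  "aval X pos i = fvals X pos ! i"

definition sublevel :: "('v,'e) graph \<Rightarrow> ('v \<Rightarrow> real \<times> real) \<Rightarrow> nat \<Rightarrow> ('v,'e) graph" where
  "sublevel X pos i = X\<lparr> gV := {v\<in>gV X. hv pos v \<le> aval X pos i},
                        gE := {e\<in>gE X. he X pos e \<le> aval X pos i} \<rparr>"

text \<open>Intermediate complex IC_i: the cells of G_i \<setminus> G_{i-1}, i.e. those with value a_i,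
  together with the endpoints of those edges (vertex set and edge set).\<close>

definition IC_V :: "('v,'e) graph \<Rightarrow> ('v \<Rightarrow> real \<times> real) \<Rightarrow> nat \<Rightarrow> 'v set" where
  "IC_V X pos i = {v\<in>gV X. hv pos v = aval X pos i}
      \<union> (\<Union>e\<in>{e\<in>gE X. he X pos e = aval X pos i}. {gsrc X e, gtgt X e})"

definition IC_E :: "('v,'e) graph \<Rightarrow> ('v \<Rightarrow> real \<times> real) \<Rightarrow> nat \<Rightarrow> 'e set" where
  "IC_E X pos i = {e\<in>gE X. he X pos e = aval X pos i}"

section \<open>FB-persistence\<close>

text \<open>Graphs with vertex type 'v option: Some v is an original vertex, None is the point
  to which contracted pieces are collapsed.\<close>

definition lift_graph :: "('v,'e) graph \<Rightarrow> ('v option,'e) graph" where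
  "lift_graph X = \<lparr> gV = Some ` gV X, gE = gE X,
                    gsrc = (\<lambda>e. Some (gsrc X e)), gtgt = (\<lambda>e. Some (gtgt X e)) \<rparr>"

text \<open>Quotient X / S of a graph by a subgraph S = (SV, SE): all vertices in SV are
  identified to the point None, edges in SE are removed (collapsed).\<close>

definition qvert :: "'v option set \<Rightarrow> 'v option \<Rightarrow> 'v option" where
  "qvert SV x = (if x \<in> SV then None else x)"

definition qedge :: "'e set \<Rightarrow> 'e \<Rightarrow> 'e option" where
  "qedge SE e = (if e \<in> SE then None else Some e)"

definition quot_graph :: "('v option,'e) graph \<Rightarrow> 'v option set \<Rightarrow> 'e set \<Rightarrow> ('v option,'e) graph" where
  "quot_graph X SV SE = \<lparr> gV = (gV X - SV) \<union> {None}, gE = gE X - SE,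
       gsrc = (\<lambda>e. qvert SV (gsrc X e)), gtgt = (\<lambda>e. qvert SV (gtgt X e)) \<rparr>"

text \<open>The subgraph *_j \<union> IC_{n-j} collapsed at step j (for j = 0 this is IC_n; adding
  the not-yet-present point None is harmless).\<close>

definition FB_SV :: "('v,'e) graph \<Rightarrow> ('v \<Rightarrow> real \<times> real) \<Rightarrow> nat \<Rightarrow> 'v option set" where
  "FB_SV X pos j = insert None (Some ` IC_V X pos (nlev X pos - j))"

definition FB_SE :: "('v,'e) graph \<Rightarrow> ('v \<Rightarrow> real \<times> real) \<Rightarrow> nat \<Rightarrow> 'e set" where
  "FB_SE X pos j = IC_E X pos (nlev X pos - j)"

fun Zq :: "('v,'e) graph \<Rightarrow> ('v \<Rightarrow> real \<times> real) \<Rightarrow> nat \<Rightarrow> ('v option,'e) graph" where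
  "Zq X pos 0 = lift_graph X"
| "Zq X pos (Suc j) = quot_graph (Zq X pos j) (FB_SV X pos j) (FB_SE X pos j)"

text \<open>The FB sequence G_0 \<subseteq> ... \<subseteq> G_n = G \<rightarrow> Z_1 \<rightarrow> ... \<rightarrow> Z_{n+1}, at positions
  0..2n+1 (absolute homology: empty subgraph), with inclusions and quotient maps.\<close>

definition FB_space :: "('v,'e) graph \<Rightarrow> ('v \<Rightarrow> real \<times> real) \<Rightarrow> nat \<Rightarrow> ('v option,'e) gpair" where
  "FB_space X pos t =
     (if t \<le> nlev X pos then (lift_graph (sublevel X pos t), {}, {})
      else (Zq X pos (t - nlev X pos), {}, {}))"

definition FB_map :: "('v,'e) graph \<Rightarrow> ('v \<Rightarrow> real \<times> real) \<Rightarrow> nat \<Rightarrow> ('v option,'e) cmap" where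
  "FB_map X pos t =
     (if t < nlev X pos then (id, Some)
      else (qvert (FB_SV X pos (t - nlev X pos)), qedge (FB_SE X pos (t - nlev X pos))))"

definition FB_diagram :: "nat \<Rightarrow> ('v,'e) graph \<Rightarrow> ('v \<Rightarrow> real \<times> real) \<Rightarrow> nat \<times> nat \<Rightarrow> int" where
  "FB_diagram k X pos =
     pers_diagram k (FB_space X pos) (FB_map X pos) (2 * nlev X pos + 1)"

section \<open>Extended persistence\<close>

text \<open>Combinatorial models of the sublevel set G_a = {x. f x \<le> a_i} and superlevel set
  G^a = {x. f x \<ge> a_i} of the linearly extended f (their deformation retracts):
  the sublevel subgraph G_i, and the full subgraph on the vertices with f \<ge> a_i.\<close>

definition superV :: "('v,'e) graph \<Rightarrow> ('v \<Rightarrow> real \<times> real) \<Rightarrow> nat \<Rightarrow> 'v set" where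
  "superV X pos i = {v\<in>gV X. hv pos v \<ge> aval X pos i}"

definition superE :: "('v,'e) graph \<Rightarrow> ('v \<Rightarrow> real \<times> real) \<Rightarrow> nat \<Rightarrow> 'e set" where
  "superE X pos i = {e\<in>gE X. hv pos (gsrc X e) \<ge> aval X pos i \<and> hv pos (gtgt X e) \<ge> aval X pos i}"

text \<open>H(G_{a_0}) \<rightarrow> ... \<rightarrow> H(G_{a_n}) = H(G) \<rightarrow> H(G,G^{a_n}) \<rightarrow> ... \<rightarrow> H(G,G^{a_0}),
  positions 0..2n+1; all maps induced by inclusions.\<close>

definition EP_space :: "('v,'e) graph \<Rightarrow> ('v \<Rightarrow> real \<times> real) \<Rightarrow> nat \<Rightarrow> ('v,'e) gpair" where
  "EP_space X pos t =
     (if t \<le> nlev X pos then (sublevel X pos t, {}, {})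
      else (X, superV X pos (2 * nlev X pos + 1 - t), superE X pos (2 * nlev X pos + 1 - t)))"

definition EP_map :: "('v,'e) graph \<Rightarrow> ('v \<Rightarrow> real \<times> real) \<Rightarrow> nat \<Rightarrow> ('v,'e) cmap" where
  "EP_map X pos t = (id, Some)"

definition EP_diagram :: "nat \<Rightarrow> ('v,'e) graph \<Rightarrow> ('v \<Rightarrow> real \<times> real) \<Rightarrow> nat \<times> nat \<Rightarrow> int" where
  "EP_diagram k X pos =
     pers_diagram k (EP_space X pos) (EP_map X pos) (2 * nlev X pos + 1)"

end

theory Submission
  imports Defs
begin


declare add_bit_eq_xor[simp del] mult_bit_eq_and[simp del]

lemma bit_add_self[simp]: "(x::bit) + x = 0"
  by (cases x) auto

interpretation Z: vector_space z2scale
  by unfold_locales (auto simp: z2scale_def fun_eq_iff algebra_simps)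

lemma z2scale0[simp]: "z2scale 0 x = 0" and z2scale1[simp]: "z2scale 1 x = x"
  by (auto simp: z2scale_def fun_eq_iff)

lemma sum_fun_apply: "(\<Sum>i\<in>A. f i) x = (\<Sum>i\<in>A. (f i x :: bit))"
  by (induct A rule: infinite_finite_induct) auto

definition dl :: "'a \<Rightarrow> 'a \<Rightarrow> bit" where "dl x = (\<lambda>y. if y = x then 1 else 0)"

definition supp_on :: "'a set \<Rightarrow> ('a \<Rightarrow> bit) set" where
  "supp_on S = {c. \<forall>x. x \<notin> S \<longrightarrow> c x = 0}"

lemma subspace_supp: "Z.subspace (supp_on S)"
  unfolding Z.subspace_def supp_on_def z2scale_def by auto

lemma supp_on_span: assumes "finite S" shows "supp_on S = Z.span (dl ` S)"
proof
  show "supp_on S \<subseteq> Z.span (dl ` S)"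
  proof
    fix c assume c: "c \<in> supp_on S"
    have "c = (\<Sum>x\<in>S. z2scale (c x) (dl x))"
    proof
      fix y
      have "(\<Sum>x\<in>S. z2scale (c x) (dl x)) y = (\<Sum>x\<in>S. if x = y then c x else 0)"
        unfolding sum_fun_apply by (rule sum.cong) (auto simp: z2scale_def dl_def)
      also have "\<dots> = c y" using c assms by (auto simp: supp_on_def)
      finally show "c y = (\<Sum>x\<in>S. z2scale (c x) (dl x)) y" by simp
    qed
    also have "\<dots> \<in> Z.span (dl ` S)"
      by (intro Z.span_sum Z.span_scale Z.span_base) auto
    finally show "c \<in> Z.span (dl ` S)" .
  qed
  show "Z.span (dl ` S) \<subseteq> supp_on S"
    by (rule Z.span_minimal[OF _ subspace_supp]) (auto simp: supp_on_def dl_def split: if_splits)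
qed

lemma lin_of_add:
  assumes "\<And>x y. f (x + y) = f x + f y"
  shows "Vector_Spaces.linear z2scale z2scale (f :: ('a \<Rightarrow> bit) \<Rightarrow> ('b \<Rightarrow> bit))"
proof -
  have f0: "f 0 = 0" using assms[of 0 0] by simp
  show ?thesis
  proof (unfold_locales)
    fix b1 b2 show "f (b1 + b2) = f b1 + f b2" by (rule assms)
  next
    fix r :: bit and b show "f (z2scale r b) = z2scale r (f b)"
      by (cases r) (auto simp: f0)
  qed
qed

lemma span_image_lin: "Vector_Spaces.linear z2scale z2scale f \<Longrightarrow> f ` Z.span S = Z.span (f ` S)"
  by (simp add: Vector_Spaces.linear_iff_module_hom module_hom.span_image)

lemma chainmap0_add: "chainmap0 P Q m (x + y) = chainmap0 P Q m x + chainmap0 P Q m y"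
  by (auto simp: chainmap0_def fun_eq_iff sum.distrib[symmetric] intro!: sum.cong)

lemma chainmap1_add: "chainmap1 P Q m (x + y) = chainmap1 P Q m x + chainmap1 P Q m y"
  by (auto simp: chainmap1_def fun_eq_iff sum.distrib[symmetric] intro!: sum.cong)

lemma bdry_add: "bdry P (x + y) = bdry P x + bdry P y"
  by (auto simp: bdry_def fun_eq_iff sum.distrib[symmetric] distrib_right intro!: sum.cong)

lemma compmap0_add: "compmap0 sp mp i d (x + y) = compmap0 sp mp i d x + compmap0 sp mp i d y"
  by (induct d) (simp_all only: compmap0.simps id_apply comp_apply chainmap0_add)

lemma compmap1_add: "compmap1 sp mp i d (x + y) = compmap1 sp mp i d x + compmap1 sp mp i d y"
  by (induct d) (simp_all only: compmap1.simps id_apply comp_apply chainmap1_add)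

lemma chainmap0_zero[simp]: "chainmap0 P Q m 0 = 0"
  by (simp add: chainmap0_def fun_eq_iff cong: if_cong)
lemma chainmap1_zero[simp]: "chainmap1 P Q m 0 = 0"
  by (simp add: chainmap1_def fun_eq_iff cong: if_cong)

lemma chainmap0_supp: "chainmap0 P Q m c \<in> supp_on (gV (pgraph Q))"
  by (auto simp: chainmap0_def supp_on_def)
lemma chainmap1_supp: "chainmap1 P Q m c \<in> supp_on (gE (pgraph Q))"
  by (auto simp: chainmap1_def supp_on_def)
lemma bdry_supp: "bdry P c \<in> supp_on (gV (pgraph P))"
  by (auto simp: bdry_def supp_on_def)

lemma compmap0_supp: "compmap0 sp mp i (Suc d) c \<in> supp_on (gV (pgraph (sp (i + Suc d))))"
  using chainmap0_supp by (simp add: add.commute)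
lemma compmap1_supp: "compmap1 sp mp i (Suc d) c \<in> supp_on (gE (pgraph (sp (i + Suc d))))"
  using chainmap1_supp by (simp add: add.commute)

fun spanlist :: "('a \<Rightarrow> bit) list \<Rightarrow> ('a \<Rightarrow> bit) list" where
  "spanlist [] = [0]"
| "spanlist (b # B) = spanlist B @ map (\<lambda>x. b + x) (spanlist B)"

lemma set_spanlist: "set (spanlist B) = Z.span (set B)"
proof (induct B)
  case Nil then show ?case by simp
next
  case (Cons b B)
  show ?case
  proof (rule set_eqI)
    fix x
    have "x \<in> Z.span (set (b # B)) \<longleftrightarrow> (\<exists>k. x - z2scale k b \<in> Z.span (set B))"
      using Z.span_breakdown_eq by simp
    also have "\<dots> \<longleftrightarrow> x \<in> Z.span (set B) \<or> x - b \<in> Z.span (set B)"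
    proof
      assume "\<exists>k. x - z2scale k b \<in> Z.span (set B)"
      then obtain k where k: "x - z2scale k b \<in> Z.span (set B)" by blast
      show "x \<in> Z.span (set B) \<or> x - b \<in> Z.span (set B)"
      proof (cases "k = 0")
        case True then show ?thesis using k by simp
      next
        case False then have "k = 1" by simp
        then show ?thesis using k by simp
      qed
    next
      assume "x \<in> Z.span (set B) \<or> x - b \<in> Z.span (set B)"
      then show "\<exists>k. x - z2scale k b \<in> Z.span (set B)"
      proof
        assume "x \<in> Z.span (set B)" then show ?thesis by (intro exI[of _ 0]) simp
      next
        assume "x - b \<in> Z.span (set B)" then show ?thesis by (intro exI[of _ 1]) simp
      qed
    qed
    also have "\<dots> \<longleftrightarrow> x \<in> set (spanlist (b # B))"
    proof -
      have "x \<in> (\<lambda>y. b + y) ` Z.span (set B) \<longleftrightarrow> x - b \<in> Z.span (set B)"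
      proof
        assume "x \<in> (\<lambda>y. b + y) ` Z.span (set B)"
        then obtain y where "y \<in> Z.span (set B)" "x = b + y" by blast
        then show "x - b \<in> Z.span (set B)" by simp
      next
        assume "x - b \<in> Z.span (set B)"
        moreover have "x = b + (x - b)" by simp
        ultimately show "x \<in> (\<lambda>y. b + y) ` Z.span (set B)" by blast
      qed
      then show ?thesis using Cons by simp
    qed
    finally show "x \<in> set (spanlist (b # B)) \<longleftrightarrow> x \<in> Z.span (set (b # B))" by simp
  qed
qed

definition vec :: "'a list \<Rightarrow> ('a \<Rightarrow> bit) \<Rightarrow> bit list" where "vec ds v = map v ds"

fun lsp :: "bit list \<Rightarrow> bit list list \<Rightarrow> bit list list" where
  "lsp z [] = [z]"
| "lsp z (b # B) = lsp z B @ map (\<lambda>x. map2 (+) b x) (lsp z B)"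

fun brk :: "bit list list \<Rightarrow> bit list list \<Rightarrow> nat" where
  "brk B [] = length B"
| "brk B (x # T) = (if x \<in> set (lsp (map (\<lambda>_. 0) x) B) then brk B T else brk (x # B) T)"

lemma map2_vec: "map2 (+) (vec ds b) (vec ds x) = vec ds (b + x)"
  by (induct ds) (auto simp: vec_def)

lemma lsp_vec: "lsp (map (\<lambda>_. 0) ds) (map (vec ds) B) = map (vec ds) (spanlist B)"
proof (induct B)
  case Nil then show ?case by (simp add: vec_def)
next
  case (Cons b B)
  have "lsp (map (\<lambda>_. 0) ds) (map (vec ds) (b # B)) =
     map (vec ds) (spanlist B) @ map (\<lambda>x. map2 (+) (vec ds b) x) (map (vec ds) (spanlist B))"
    by (simp only: list.map lsp.simps Cons)
  also have "\<dots> = map (vec ds) (spanlist (b # B))"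
    by (simp only: map_map comp_def map2_vec spanlist.simps map_append)
  finally show ?case .
qed

lemma vec_inj: "v \<in> supp_on (set ds) \<Longrightarrow> w \<in> supp_on (set ds) \<Longrightarrow> vec ds v = vec ds w \<Longrightarrow> v = w"
proof (rule ext)
  fix x
  assume a: "v \<in> supp_on (set ds)" "w \<in> supp_on (set ds)" "vec ds v = vec ds w"
  show "v x = w x"
  proof (cases "x \<in> set ds")
    case True then show ?thesis using a(3) unfolding vec_def map_eq_conv by blast
  next
    case False then show ?thesis using a(1,2) unfolding supp_on_def by simp
  qed
qed

lemma dim_insert_span: "x \<in> Z.span S \<Longrightarrow> Z.dim (insert x S) = Z.dim S"
proof -
  assume "x \<in> Z.span S"
  then have "Z.span (insert x S) = Z.span S"
    by (simp add: Z.span_eq Z.span_superset insert_subset)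
       (meson Z.span_mono Z.span_superset subset_insertI subset_trans)
  then show ?thesis by (metis Z.dim_span)
qed

lemma brk_correct:
  "set B \<subseteq> supp_on (set ds) \<Longrightarrow> Z.independent (set B) \<Longrightarrow> distinct B \<Longrightarrow>
   set T \<subseteq> supp_on (set ds) \<Longrightarrow> brk (map (vec ds) B) (map (vec ds) T) = Z.dim (set B \<union> set T)"
proof (induct T arbitrary: B)
  case Nil then show ?case by (simp add: Z.dim_eq_card_independent distinct_card)
next
  case (Cons v T)
  have spsub: "Z.span (set B) \<subseteq> supp_on (set ds)"
    using Cons by (intro Z.span_minimal subspace_supp) auto
  have vs: "v \<in> supp_on (set ds)" using Cons by auto
  have key: "vec ds v \<in> set (lsp (map (\<lambda>_. 0) (vec ds v)) (map (vec ds) B)) \<longleftrightarrow> v \<in> Z.span (set B)"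
  proof -
    have "map (\<lambda>_. 0::bit) (vec ds v) = map (\<lambda>_. 0) ds" by (simp add: vec_def)
    then have "set (lsp (map (\<lambda>_. 0) (vec ds v)) (map (vec ds) B)) = vec ds ` Z.span (set B)"
      by (simp add: lsp_vec set_spanlist)
    then show ?thesis using vs spsub vec_inj by blast
  qed
  show ?case
  proof (cases "v \<in> Z.span (set B)")
    case True
    then have "brk (map (vec ds) B) (map (vec ds) (v # T)) = Z.dim (set B \<union> set T)"
      using key Cons by simp
    moreover have "v \<in> Z.span (set B \<union> set T)" using True Z.span_mono[of "set B"] by blast
    ultimately show ?thesis using dim_insert_span[of v "set B \<union> set T"] by simp
  next
    case False
    then have "brk (map (vec ds) B) (map (vec ds) (v # T)) = brk (map (vec ds) (v # B)) (map (vec ds) T)"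
      using key by simp
    also have "\<dots> = Z.dim (set (v # B) \<union> set T)"
    proof (rule Cons.hyps)
      show "set (v # B) \<subseteq> supp_on (set ds)" using Cons by auto
      show "Z.independent (set (v # B))" using False Cons Z.independent_insertI by simp
      show "distinct (v # B)" using False Cons Z.span_base by auto
      show "set T \<subseteq> supp_on (set ds)" using Cons by auto
    qed
    finally show ?thesis by simp
  qed
qed

lemma dim_brk: "set L \<subseteq> supp_on (set ds) \<Longrightarrow> Z.dim (set L) = brk [] (map (vec ds) L)"
  using brk_correct[of "[]" ds L] by (simp add: Z.independent_empty)

lemma chains0_supp: "chains0 P = supp_on (gV (pgraph P) - pLV P)"
  by (auto simp: chains0_def supp_on_def)
lemma chains1_supp: "chains1 P = supp_on (gE (pgraph P) - pLE P)"
  by (auto simp: chains1_def supp_on_def)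

lemma dim_span_un: "Z.dim (Z.span A \<union> Z.span B) = Z.dim (A \<union> B)"
proof -
  have "Z.span (Z.span A \<union> Z.span B) = Z.span (A \<union> B)"
    by (simp add: Z.span_eq Z.span_mono Z.span_superset le_supI1 le_supI2)
       (meson Z.span_mono Z.span_span Z.span_superset le_sup_iff subset_trans Un_upper1 Un_upper2)
  then show ?thesis by (metis Z.dim_span)
qed

lemma lin_compmap0: "Vector_Spaces.linear z2scale z2scale (compmap0 sp mp i d)"
  by (rule lin_of_add) (rule compmap0_add)
lemma lin_compmap1: "Vector_Spaces.linear z2scale z2scale (compmap1 sp mp i d)"
  by (rule lin_of_add) (rule compmap1_add)
lemma lin_bdry: "Vector_Spaces.linear z2scale z2scale (bdry P)"
  by (rule lin_of_add) (rule bdry_add)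

lemma hrank0:
  assumes "j - i = d" "i \<le> j"
    "set vs = gV (pgraph (sp i)) - pLV (sp i)" "set es = gE (pgraph (sp j)) - pLE (sp j)"
    "set vs \<subseteq> set ds" "gV (pgraph (sp j)) \<subseteq> set ds"
  shows "hrank 0 sp mp i j =
    brk [] (map (vec ds) (map (compmap0 sp mp i d) (map dl vs) @ map (bdry (sp j)) (map dl es)))
    - brk [] (map (vec ds) (map (bdry (sp j)) (map dl es)))"
proof -
  have j: "j = i + d" using assms by simp
  have c0: "cycles0 (sp i) = Z.span (dl ` set vs)"
    unfolding cycles0_def chains0_supp assms(3)[symmetric] by (rule supp_on_span[OF finite_set])
  have b0: "bounds0 (sp j) = Z.span (bdry (sp j) ` dl ` set es)"
    unfolding bounds0_def chains1_supp assms(4)[symmetric] supp_on_span[OF finite_set]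
    by (rule span_image_lin[OF lin_bdry])
  have im: "compmap0 sp mp i d ` cycles0 (sp i) = Z.span (compmap0 sp mp i d ` dl ` set vs)"
    unfolding c0 by (rule span_image_lin[OF lin_compmap0])
  have s1: "set (map (compmap0 sp mp i d) (map dl vs) @ map (bdry (sp j)) (map dl es)) \<subseteq> supp_on (set ds)"
  proof -
    have "compmap0 sp mp i d (dl v) \<in> supp_on (set ds)" if "v \<in> set vs" for v
    proof (cases d)
      case 0 then show ?thesis using that assms(5) by (auto simp: supp_on_def dl_def)
    next
      case (Suc d') then show ?thesis using compmap0_supp[of sp mp i d' "dl v"] assms(6) j
        by (auto simp: supp_on_def)
    qed
    moreover have "bdry (sp j) c \<in> supp_on (set ds)" for c
      using bdry_supp[of "sp j" c] assms(6) by (auto simp: supp_on_def)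
    ultimately show ?thesis by auto
  qed
  have s2: "set (map (bdry (sp j)) (map dl es)) \<subseteq> supp_on (set ds)" using s1 by auto
  have e1: "compmap0 sp mp i d ` dl ` set vs \<union> bdry (sp j) ` dl ` set es =
      set (map (compmap0 sp mp i d) (map dl vs) @ map (bdry (sp j)) (map dl es))"
    by (simp only: set_append set_map)
  have e2: "bdry (sp j) ` dl ` set es = set (map (bdry (sp j)) (map dl es))"
    by (simp only: set_map)
  have "hrank 0 sp mp i j = Z.dim (compmap0 sp mp i d ` cycles0 (sp i) \<union> bounds0 (sp j))
      - Z.dim (bounds0 (sp j))"
    unfolding hrank_def z2dim_def using assms(1) by simp
  also have "\<dots> = Z.dim (set (map (compmap0 sp mp i d) (map dl vs) @ map (bdry (sp j)) (map dl es)))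
      - Z.dim (set (map (bdry (sp j)) (map dl es)))"
    unfolding im b0 dim_span_un Z.dim_span unfolding e1 unfolding e2 ..
  also have "\<dots> = brk [] (map (vec ds) (map (compmap0 sp mp i d) (map dl vs) @ map (bdry (sp j)) (map dl es)))
    - brk [] (map (vec ds) (map (bdry (sp j)) (map dl es)))"
    by (simp only: dim_brk[OF s1] dim_brk[OF s2])
  finally show ?thesis .
qed

lemma dim_zero: "Z.dim {0 :: 'a \<Rightarrow> bit} = 0"
proof -
  have "Z.dim {0::'a\<Rightarrow>bit} = Z.dim ({}::('a\<Rightarrow>bit) set)"
    by (rule dim_insert_span) (simp add: Z.span_zero)
  also have "\<dots> = 0"
    using Z.dim_eq_card_independent[of "{}::('a\<Rightarrow>bit) set"] Z.independent_empty by simp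
  finally show ?thesis .
qed

lemma hrank1:
  fixes sp :: "nat \<Rightarrow> ('v,'e) gpair"
  assumes "j - i = d" "i \<le> j"
    "set es = gE (pgraph (sp i)) - pLE (sp i)" "gV (pgraph (sp i)) \<subseteq> set vds"
    "set es \<subseteq> set ds" "gE (pgraph (sp j)) \<subseteq> set ds"
  shows "hrank 1 sp mp i j =
    brk [] (map (vec ds) (map (compmap1 sp mp i d)
       (filter (\<lambda>c. \<forall>w\<in>set vds. bdry (sp i) c w = 0) (spanlist (map dl es)))))"
proof -
  have j: "j = i + d" using assms by simp
  have ch: "chains1 (sp i) = set (spanlist (map dl es))"
    unfolding chains1_supp set_spanlist assms(3)[symmetric] supp_on_span[OF finite_set]
    by (simp only: set_map)
  have bz: "bdry (sp i) c = 0 \<longleftrightarrow> (\<forall>w\<in>set vds. bdry (sp i) c w = 0)" for c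
  proof
    assume "bdry (sp i) c = 0" then show "\<forall>w\<in>set vds. bdry (sp i) c w = 0" by simp
  next
    assume a: "\<forall>w\<in>set vds. bdry (sp i) c w = 0"
    show "bdry (sp i) c = 0"
    proof
      fix w
      show "bdry (sp i) c w = 0 w"
      proof (cases "w \<in> set vds")
        case True then show ?thesis using a by simp
      next
        case False then have "w \<notin> gV (pgraph (sp i))" using assms(4) by blast
        then show ?thesis using bdry_supp[of "sp i" c] unfolding supp_on_def by simp
      qed
    qed
  qed
  define cl where "cl = filter (\<lambda>c. \<forall>w\<in>set vds. bdry (sp i) c w = 0) (spanlist (map dl es))"
  have c1: "cycles1 (sp i) = set cl"
    unfolding cycles1_def ch cl_def set_filter using bz by simp
  have clsub: "set cl \<subseteq> supp_on (set es)"
  proof -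
    have "set cl \<subseteq> set (spanlist (map dl es))" unfolding cl_def by simp
    also have "\<dots> = supp_on (set es)"
      unfolding set_spanlist supp_on_span[OF finite_set] by (simp only: set_map)
    finally show ?thesis .
  qed
  have s1: "set (map (compmap1 sp mp i d) cl) \<subseteq> supp_on (set ds)"
  proof -
    have "compmap1 sp mp i d c \<in> supp_on (set ds)" if "c \<in> set cl" for c
    proof (cases d)
      case 0 then show ?thesis using that clsub assms(5) by (auto simp: supp_on_def)
    next
      case (Suc d')
      have "compmap1 sp mp i d c \<in> supp_on (gE (pgraph (sp j)))"
        using compmap1_supp[of sp mp i d' c] j Suc by simp
      then show ?thesis using assms(6) by (auto simp: supp_on_def)
    qed
    then show ?thesis by auto
  qed
  have "hrank 1 sp mp i j = Z.dim (compmap1 sp mp i d ` set cl \<union> {0}) - Z.dim {0 :: 'e \<Rightarrow> bit}"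
    unfolding hrank_def z2dim_def bounds1_def c1 using assms(1) by simp
  also have "\<dots> = Z.dim (set (map (compmap1 sp mp i d) cl))"
    using dim_insert_span[of 0 "compmap1 sp mp i d ` set cl"] dim_zero[where 'a='e] by (simp add: Z.span_zero)
  also have "\<dots> = brk [] (map (vec ds) (map (compmap1 sp mp i d) cl))"
    by (rule dim_brk[OF s1])
  finally show ?thesis unfolding cl_def .
qed



definition GG :: "(nat, nat) graph" where
  "GG = \<lparr>gV = {0,1,2}, gE = {0,1}, gsrc = (\<lambda>e. 0), gtgt = (\<lambda>e. if e = 0 then 1 else 2)\<rparr>"
definition posG :: "nat \<Rightarrow> real \<times> real" where
  "posG v = (if v = 0 then (0,0) else if v = 1 then (-1,1) else (1,1))"
definition HH :: "(nat, nat) graph" where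
  "HH = \<lparr>gV = {0,1,2,3}, gE = {0,1,2}, gsrc = (\<lambda>e. if e = 2 then 1 else 0),
         gtgt = (\<lambda>e. if e = 0 then 1 else if e = 1 then 2 else 3)\<rparr>"
definition posH :: "nat \<Rightarrow> real \<times> real" where
  "posH v = (if v = 0 then (0,0) else if v = 1 then (1,0) else if v = 2 then (0,1) else (1,1))"

lemma GG_simps[simp]: "gV GG = {0,1,2}" "gE GG = {0,1}" "gsrc GG = (\<lambda>e. 0)"
  "gtgt GG = (\<lambda>e. if e = 0 then 1 else 2)"
  by (simp_all add: GG_def)
lemma HH_simps[simp]: "gV HH = {0,1,2,3}" "gE HH = {0,1,2}" "gsrc HH = (\<lambda>e. if e = 2 then 1 else 0)"
  "gtgt HH = (\<lambda>e. if e = 0 then 1 else if e = 1 then 2 else 3)"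
  by (simp_all add: HH_def)

lemma fvals_G: "fvals GG posG = [0,1]"
proof -
  have "hv posG ` gV GG \<union> he GG posG ` gE GG = {0,1}"
    by (auto simp: hv_def he_def posG_def)
  then show ?thesis unfolding fvals_def by simp
qed
lemma fvals_H: "fvals HH posH = [0,1]"
proof -
  have "hv posH ` gV HH \<union> he HH posH ` gE HH = {0,1}"
    by (auto simp: hv_def he_def posH_def)
  then show ?thesis unfolding fvals_def by simp
qed

lemma nlev_G[simp]: "nlev GG posG = 1" by (simp add: nlev_def fvals_G)
lemma nlev_H[simp]: "nlev HH posH = 1" by (simp add: nlev_def fvals_H)
lemma aval_G[simp]: "aval GG posG 0 = 0" "aval GG posG 1 = 1" "aval GG posG (Suc 0) = 1" by (simp_all add: aval_def fvals_G)
lemma aval_H[simp]: "aval HH posH 0 = 0" "aval HH posH 1 = 1" "aval HH posH (Suc 0) = 1" by (simp_all add: aval_def fvals_H)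

lemma subG_0[simp]: "gV (sublevel GG posG 0) = {0}"
  unfolding sublevel_def by (auto simp: hv_def he_def posG_def)
lemma subG_1[simp]: "gE (sublevel GG posG 0) = {}"
  unfolding sublevel_def by (auto simp: hv_def he_def posG_def)
lemma subG_2[simp]: "gV (sublevel GG posG 1) = {0,1,2}"
  unfolding sublevel_def by (auto simp: hv_def he_def posG_def)
lemma subG_3[simp]: "gE (sublevel GG posG 1) = {0,1}"
  unfolding sublevel_def by (auto simp: hv_def he_def posG_def)
lemma subG_4[simp]: "gsrc (sublevel GG posG i) = gsrc GG"
  unfolding sublevel_def by (auto simp: hv_def he_def posG_def)
lemma subG_5[simp]: "gtgt (sublevel GG posG i) = gtgt GG"
  unfolding sublevel_def by (auto simp: hv_def he_def posG_def)
lemma subH_0[simp]: "gV (sublevel HH posH 0) = {0,1}"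
  unfolding sublevel_def by (auto simp: hv_def he_def posH_def)
lemma subH_1[simp]: "gE (sublevel HH posH 0) = {0}"
  unfolding sublevel_def by (auto simp: hv_def he_def posH_def)
lemma subH_2[simp]: "gV (sublevel HH posH 1) = {0,1,2,3}"
  unfolding sublevel_def by (auto simp: hv_def he_def posH_def)
lemma subH_3[simp]: "gE (sublevel HH posH 1) = {0,1,2}"
  unfolding sublevel_def by (auto simp: hv_def he_def posH_def)
lemma subH_4[simp]: "gsrc (sublevel HH posH i) = gsrc HH"
  unfolding sublevel_def by (auto simp: hv_def he_def posH_def)
lemma subH_5[simp]: "gtgt (sublevel HH posH i) = gtgt HH"
  unfolding sublevel_def by (auto simp: hv_def he_def posH_def)
lemma subSuc[simp]: "gV (sublevel GG posG (Suc 0)) = {0,1,2}" "gE (sublevel GG posG (Suc 0)) = {0,1}"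
  "gV (sublevel HH posH (Suc 0)) = {0,1,2,3}" "gE (sublevel HH posH (Suc 0)) = {0,1,2}"
  using subG_2 subG_3 subH_2 subH_3 by simp_all
lemma superG_0[simp]: "superV GG posG 0 = {0,1,2}"
  unfolding superV_def superE_def by (auto simp: hv_def posG_def)
lemma superG_1[simp]: "superE GG posG 0 = {0,1}"
  unfolding superV_def superE_def by (auto simp: hv_def posG_def)
lemma superG_2[simp]: "superV GG posG 1 = {1,2}"
  unfolding superV_def superE_def by (auto simp: hv_def posG_def)
lemma superG_3[simp]: "superE GG posG 1 = {}"
  unfolding superV_def superE_def by (auto simp: hv_def posG_def)
lemma superH_0[simp]: "superV HH posH 0 = {0,1,2,3}"
  unfolding superV_def superE_def by (auto simp: hv_def posH_def)
lemma superH_1[simp]: "superE HH posH 0 = {0,1,2}"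
  unfolding superV_def superE_def by (auto simp: hv_def posH_def)
lemma superH_2[simp]: "superV HH posH 1 = {2,3}"
  unfolding superV_def superE_def by (auto simp: hv_def posH_def)
lemma superH_3[simp]: "superE HH posH 1 = {}"
  unfolding superV_def superE_def by (auto simp: hv_def posH_def)
lemma superSuc[simp]: "superV GG posG (Suc 0) = {1,2}" "superE GG posG (Suc 0) = {}"
  "superV HH posH (Suc 0) = {2,3}" "superE HH posH (Suc 0) = {}"
  using superG_2 superG_3 superH_2 superH_3 by simp_all
lemma ICEG_0[simp]: "IC_E GG posG 0 = {}"
  unfolding IC_E_def by (auto simp: he_def hv_def posG_def)
lemma ICEG_1[simp]: "IC_E GG posG 1 = {0,1}"
  unfolding IC_E_def by (auto simp: he_def hv_def posG_def)
lemma ICEH_0[simp]: "IC_E HH posH 0 = {0}"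
  unfolding IC_E_def by (auto simp: he_def hv_def posH_def)
lemma ICEH_1[simp]: "IC_E HH posH 1 = {1,2}"
  unfolding IC_E_def by (auto simp: he_def hv_def posH_def)
lemma IC_V_alt: "IC_V X pos i = {v\<in>gV X. hv pos v = aval X pos i} \<union> (\<Union>e\<in>IC_E X pos i. {gsrc X e, gtgt X e})"
  by (simp add: IC_V_def IC_E_def)
lemma lvG_0[simp]: "{v\<in>gV GG. hv posG v = aval GG posG 0} = {0}"
  unfolding hv_def by (auto simp: posG_def)
lemma lvG_1[simp]: "{v\<in>gV GG. hv posG v = aval GG posG 1} = {1,2}"
  unfolding hv_def by (auto simp: posG_def)
lemma lvH_0[simp]: "{v\<in>gV HH. hv posH v = aval HH posH 0} = {0,1}"
  unfolding hv_def by (auto simp: posH_def)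
lemma lvH_1[simp]: "{v\<in>gV HH. hv posH v = aval HH posH 1} = {2,3}"
  unfolding hv_def by (auto simp: posH_def)
lemma IC_G[simp]: "IC_V GG posG 0 = {0}" "IC_V GG posG 1 = {0,1,2}"
  unfolding IC_V_alt lvG_0 lvG_1 ICEG_0 ICEG_1 by auto
lemma IC_H[simp]: "IC_V HH posH 0 = {0,1}" "IC_V HH posH 1 = {0,1,2,3}"
  unfolding IC_V_alt lvH_0 lvH_1 ICEH_0 ICEH_1 by auto

lemma ICSuc[simp]: "IC_V GG posG (Suc 0) = {0,1,2}" "IC_V HH posH (Suc 0) = {0,1,2,3}"
  "IC_E GG posG (Suc 0) = {0,1}" "IC_E HH posH (Suc 0) = {1,2}"
  using IC_G IC_H ICEG_1 ICEH_1 by simp_all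
lemma pg_simps[simp]: "pgraph (a, b, c) = a" "pLV (a, b, c) = b" "pLE (a, b, c) = c"
  by (simp_all add: pgraph_def pLV_def pLE_def)

lemma EP_G[simp]: "EP_space GG posG 0 = (sublevel GG posG 0, {}, {})"
  "EP_space GG posG (Suc 0) = (sublevel GG posG 1, {}, {})"
  "EP_space GG posG (Suc (Suc 0)) = (GG, {1,2}, {})"
  "EP_space GG posG (Suc (Suc (Suc 0))) = (GG, {0,1,2}, {0,1})"
  by (simp_all add: EP_space_def)
lemma EP_H[simp]: "EP_space HH posH 0 = (sublevel HH posH 0, {}, {})"
  "EP_space HH posH (Suc 0) = (sublevel HH posH 1, {}, {})"
  "EP_space HH posH (Suc (Suc 0)) = (HH, {2,3}, {})"
  "EP_space HH posH (Suc (Suc (Suc 0))) = (HH, {0,1,2,3}, {0,1,2})"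
  by (simp_all add: EP_space_def)
lemma EP_num[simp]: "EP_space GG posG 1 = (sublevel GG posG 1, {}, {})"
  "EP_space GG posG 2 = (GG, {1,2}, {})"
  "EP_space GG posG 3 = (GG, {0,1,2}, {0,1})"
  "EP_space HH posH 1 = (sublevel HH posH 1, {}, {})"
  "EP_space HH posH 2 = (HH, {2,3}, {})"
  "EP_space HH posH 3 = (HH, {0,1,2,3}, {0,1,2})"
  by (simp_all add: EP_space_def)
lemma EP_map_simp[simp]: "EP_map X pos t = (id, Some)" by (simp add: EP_map_def)

lemma lift_simps[simp]: "gV (lift_graph X) = Some ` gV X" "gE (lift_graph X) = gE X"
  "gsrc (lift_graph X) = (\<lambda>e. Some (gsrc X e))" "gtgt (lift_graph X) = (\<lambda>e. Some (gtgt X e))"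
  by (simp_all add: lift_graph_def)
lemma quot_simps[simp]: "gV (quot_graph X SV SE) = (gV X - SV) \<union> {None}" "gE (quot_graph X SV SE) = gE X - SE"
  "gsrc (quot_graph X SV SE) = (\<lambda>e. qvert SV (gsrc X e))" "gtgt (quot_graph X SV SE) = (\<lambda>e. qvert SV (gtgt X e))"
  by (simp_all add: quot_graph_def)
lemma FBSV[simp]: "FB_SV GG posG 0 = {None, Some 0, Some 1, Some 2}" "FB_SV GG posG 1 = {None, Some 0}"
  "FB_SV HH posH 0 = {None, Some 0, Some 1, Some 2, Some 3}" "FB_SV HH posH 1 = {None, Some 0, Some 1}"
  "FB_SE GG posG 0 = {0,1}" "FB_SE GG posG 1 = {}" "FB_SE HH posH 0 = {1,2}" "FB_SE HH posH 1 = {0}"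
  "FB_SV GG posG (Suc 0) = {None, Some 0}" "FB_SV HH posH (Suc 0) = {None, Some 0, Some 1}"
  "FB_SE GG posG (Suc 0) = {}" "FB_SE HH posH (Suc 0) = {0}"
  by (simp_all add: FB_SV_def FB_SE_def)
lemma Zq1: "Zq X pos 1 = quot_graph (lift_graph X) (FB_SV X pos 0) (FB_SE X pos 0)"
  by (simp add: One_nat_def)
lemma Zq2: "Zq X pos 2 = quot_graph (Zq X pos 1) (FB_SV X pos 1) (FB_SE X pos 1)"
  by (simp only: numeral_2_eq_2 One_nat_def Zq.simps)
lemma ZqG[simp]: "gV (Zq GG posG 1) = {None}" "gE (Zq GG posG 1) = {}"
  "gV (Zq GG posG 2) = {None}" "gE (Zq GG posG 2) = {}"
  by (auto simp: Zq2 Zq1)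
lemma ZqH[simp]: "gV (Zq HH posH 1) = {None}" "gE (Zq HH posH 1) = {0}"
  "gsrc (Zq HH posH 1) = (\<lambda>e. None)" "gtgt (Zq HH posH 1) = (\<lambda>e. None)"
  "gV (Zq HH posH 2) = {None}" "gE (Zq HH posH 2) = {}"
  by (auto simp: Zq2 Zq1 qvert_def fun_eq_iff)
lemma FBsp[simp]:
  "FB_space GG posG 1 = (lift_graph (sublevel GG posG 1), {}, {})"
  "FB_space GG posG 2 = (Zq GG posG 1, {}, {})"
  "FB_space GG posG 3 = (Zq GG posG 2, {}, {})"
  "FB_space HH posH 1 = (lift_graph (sublevel HH posH 1), {}, {})"
  "FB_space HH posH 2 = (Zq HH posH 1, {}, {})"
  "FB_space HH posH 3 = (Zq HH posH 2, {}, {})"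
  "FB_space GG posG (Suc 0) = (lift_graph (sublevel GG posG 1), {}, {})"
  "FB_space GG posG (Suc (Suc 0)) = (Zq GG posG 1, {}, {})"
  "FB_space GG posG (Suc (Suc (Suc 0))) = (Zq GG posG 2, {}, {})"
  "FB_space HH posH (Suc 0) = (lift_graph (sublevel HH posH 1), {}, {})"
  "FB_space HH posH (Suc (Suc 0)) = (Zq HH posH 1, {}, {})"
  "FB_space HH posH (Suc (Suc (Suc 0))) = (Zq HH posH 2, {}, {})"
  by (simp_all add: FB_space_def numeral_3_eq_3 numeral_2_eq_2 del: Zq.simps)
lemma FBmp[simp]:
  "FB_map GG posG 1 = (qvert (FB_SV GG posG 0), qedge (FB_SE GG posG 0))"
  "FB_map GG posG 2 = (qvert (FB_SV GG posG 1), qedge (FB_SE GG posG 1))"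
  "FB_map HH posH 1 = (qvert (FB_SV HH posH 0), qedge (FB_SE HH posH 0))"
  "FB_map HH posH 2 = (qvert (FB_SV HH posH 1), qedge (FB_SE HH posH 1))"
  "FB_map GG posG (Suc 0) = (qvert (FB_SV GG posG 0), qedge (FB_SE GG posG 0))"
  "FB_map GG posG (Suc (Suc 0)) = (qvert (FB_SV GG posG 1), qedge (FB_SE GG posG 1))"
  "FB_map HH posH (Suc 0) = (qvert (FB_SV HH posH 0), qedge (FB_SE HH posH 0))"
  "FB_map HH posH (Suc (Suc 0)) = (qvert (FB_SV HH posH 1), qedge (FB_SE HH posH 1))"
  by (simp_all add: FB_map_def del: FBSV)

lemma epG_0_0_0: "hrank 0 (EP_space GG posG) (EP_map GG posG) 0 0 = 1"
  by (subst hrank0[where d = "0" and vs = "[0]" and es = "[]" and ds = "[0,1,2]"]; simp add: vec_def dl_def chainmap0_def chainmap1_def bdry_def incid_def qvert_def qedge_def insert_Diff_if)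

lemma epG_0_0_1: "hrank 0 (EP_space GG posG) (EP_map GG posG) 0 1 = 1"
  by (subst hrank0[where d = "Suc (0)" and vs = "[0]" and es = "[0,1]" and ds = "[0,1,2]"]; simp add: vec_def dl_def chainmap0_def chainmap1_def bdry_def incid_def qvert_def qedge_def insert_Diff_if)

lemma epG_0_0_2: "hrank 0 (EP_space GG posG) (EP_map GG posG) 0 2 = 0"
  by (subst hrank0[where d = "Suc (Suc (0))" and vs = "[0]" and es = "[0,1]" and ds = "[0,1,2]"]; simp add: vec_def dl_def chainmap0_def chainmap1_def bdry_def incid_def qvert_def qedge_def insert_Diff_if)

lemma epG_0_0_3: "hrank 0 (EP_space GG posG) (EP_map GG posG) 0 3 = 0"
  by (subst hrank0[where d = "Suc (Suc (Suc (0)))" and vs = "[0]" and es = "[]" and ds = "[0,1,2]"]; simp add: vec_def dl_def chainmap0_def chainmap1_def bdry_def incid_def qvert_def qedge_def insert_Diff_if)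

lemma epG_0_1_1: "hrank 0 (EP_space GG posG) (EP_map GG posG) 1 1 = 1"
  by (subst hrank0[where d = "0" and vs = "[0,1,2]" and es = "[0,1]" and ds = "[0,1,2]"]; simp add: vec_def dl_def chainmap0_def chainmap1_def bdry_def incid_def qvert_def qedge_def insert_Diff_if)

lemma epG_0_1_2: "hrank 0 (EP_space GG posG) (EP_map GG posG) 1 2 = 0"
  by (subst hrank0[where d = "Suc (0)" and vs = "[0,1,2]" and es = "[0,1]" and ds = "[0,1,2]"]; simp add: vec_def dl_def chainmap0_def chainmap1_def bdry_def incid_def qvert_def qedge_def insert_Diff_if)

lemma epG_0_1_3: "hrank 0 (EP_space GG posG) (EP_map GG posG) 1 3 = 0"
  by (subst hrank0[where d = "Suc (Suc (0))" and vs = "[0,1,2]" and es = "[]" and ds = "[0,1,2]"]; simp add: vec_def dl_def chainmap0_def chainmap1_def bdry_def incid_def qvert_def qedge_def insert_Diff_if)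

lemma epG_0_2_2: "hrank 0 (EP_space GG posG) (EP_map GG posG) 2 2 = 0"
  by (subst hrank0[where d = "0" and vs = "[0]" and es = "[0,1]" and ds = "[0,1,2]"]; simp add: vec_def dl_def chainmap0_def chainmap1_def bdry_def incid_def qvert_def qedge_def insert_Diff_if)

lemma epG_0_2_3: "hrank 0 (EP_space GG posG) (EP_map GG posG) 2 3 = 0"
  by (subst hrank0[where d = "Suc (0)" and vs = "[0]" and es = "[]" and ds = "[0,1,2]"]; simp add: vec_def dl_def chainmap0_def chainmap1_def bdry_def incid_def qvert_def qedge_def insert_Diff_if)

lemma epG_0_3_3: "hrank 0 (EP_space GG posG) (EP_map GG posG) 3 3 = 0"
  by (subst hrank0[where d = "0" and vs = "[]" and es = "[]" and ds = "[0,1,2]"]; simp add: vec_def dl_def chainmap0_def chainmap1_def bdry_def incid_def qvert_def qedge_def insert_Diff_if)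

lemma epG_1_0_0: "hrank 1 (EP_space GG posG) (EP_map GG posG) 0 0 = 0"
  by (subst hrank1[where d = "0" and es = "[]" and vds = "[0,1,2]" and ds = "[0,1]"]; simp add: vec_def dl_def chainmap0_def chainmap1_def bdry_def incid_def qvert_def qedge_def insert_Diff_if)

lemma epG_1_0_1: "hrank 1 (EP_space GG posG) (EP_map GG posG) 0 1 = 0"
  by (subst hrank1[where d = "Suc (0)" and es = "[]" and vds = "[0,1,2]" and ds = "[0,1]"]; simp add: vec_def dl_def chainmap0_def chainmap1_def bdry_def incid_def qvert_def qedge_def insert_Diff_if)

lemma epG_1_0_2: "hrank 1 (EP_space GG posG) (EP_map GG posG) 0 2 = 0"
  by (subst hrank1[where d = "Suc (Suc (0))" and es = "[]" and vds = "[0,1,2]" and ds = "[0,1]"]; simp add: vec_def dl_def chainmap0_def chainmap1_def bdry_def incid_def qvert_def qedge_def insert_Diff_if)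

lemma epG_1_0_3: "hrank 1 (EP_space GG posG) (EP_map GG posG) 0 3 = 0"
  by (subst hrank1[where d = "Suc (Suc (Suc (0)))" and es = "[]" and vds = "[0,1,2]" and ds = "[0,1]"]; simp add: vec_def dl_def chainmap0_def chainmap1_def bdry_def incid_def qvert_def qedge_def insert_Diff_if)

lemma epG_1_1_1: "hrank 1 (EP_space GG posG) (EP_map GG posG) 1 1 = 0"
  by (subst hrank1[where d = "0" and es = "[0,1]" and vds = "[0,1,2]" and ds = "[0,1]"]; simp add: vec_def dl_def chainmap0_def chainmap1_def bdry_def incid_def qvert_def qedge_def insert_Diff_if)

lemma epG_1_1_2: "hrank 1 (EP_space GG posG) (EP_map GG posG) 1 2 = 0"
  by (subst hrank1[where d = "Suc (0)" and es = "[0,1]" and vds = "[0,1,2]" and ds = "[0,1]"]; simp add: vec_def dl_def chainmap0_def chainmap1_def bdry_def incid_def qvert_def qedge_def insert_Diff_if)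

lemma epG_1_1_3: "hrank 1 (EP_space GG posG) (EP_map GG posG) 1 3 = 0"
  by (subst hrank1[where d = "Suc (Suc (0))" and es = "[0,1]" and vds = "[0,1,2]" and ds = "[0,1]"]; simp add: vec_def dl_def chainmap0_def chainmap1_def bdry_def incid_def qvert_def qedge_def insert_Diff_if)

lemma epG_1_2_2: "hrank 1 (EP_space GG posG) (EP_map GG posG) 2 2 = 1"
  by (subst hrank1[where d = "0" and es = "[0,1]" and vds = "[0,1,2]" and ds = "[0,1]"]; simp add: vec_def dl_def chainmap0_def chainmap1_def bdry_def incid_def qvert_def qedge_def insert_Diff_if)

lemma epG_1_2_3: "hrank 1 (EP_space GG posG) (EP_map GG posG) 2 3 = 0"
  by (subst hrank1[where d = "Suc (0)" and es = "[0,1]" and vds = "[0,1,2]" and ds = "[0,1]"]; simp add: vec_def dl_def chainmap0_def chainmap1_def bdry_def incid_def qvert_def qedge_def insert_Diff_if)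

lemma epG_1_3_3: "hrank 1 (EP_space GG posG) (EP_map GG posG) 3 3 = 0"
  by (subst hrank1[where d = "0" and es = "[]" and vds = "[0,1,2]" and ds = "[0,1]"]; simp add: vec_def dl_def chainmap0_def chainmap1_def bdry_def incid_def qvert_def qedge_def insert_Diff_if)

lemma epH_0_0_0: "hrank 0 (EP_space HH posH) (EP_map HH posH) 0 0 = 1"
  by (subst hrank0[where d = "0" and vs = "[0,1]" and es = "[0]" and ds = "[0,1,2,3]"]; simp add: vec_def dl_def chainmap0_def chainmap1_def bdry_def incid_def qvert_def qedge_def insert_Diff_if)

lemma epH_0_0_1: "hrank 0 (EP_space HH posH) (EP_map HH posH) 0 1 = 1"
  by (subst hrank0[where d = "Suc (0)" and vs = "[0,1]" and es = "[0,1,2]" and ds = "[0,1,2,3]"]; simp add: vec_def dl_def chainmap0_def chainmap1_def bdry_def incid_def qvert_def qedge_def insert_Diff_if)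

lemma epH_0_0_2: "hrank 0 (EP_space HH posH) (EP_map HH posH) 0 2 = 0"
  by (subst hrank0[where d = "Suc (Suc (0))" and vs = "[0,1]" and es = "[0,1,2]" and ds = "[0,1,2,3]"]; simp add: vec_def dl_def chainmap0_def chainmap1_def bdry_def incid_def qvert_def qedge_def insert_Diff_if)

lemma epH_0_0_3: "hrank 0 (EP_space HH posH) (EP_map HH posH) 0 3 = 0"
  by (subst hrank0[where d = "Suc (Suc (Suc (0)))" and vs = "[0,1]" and es = "[]" and ds = "[0,1,2,3]"]; simp add: vec_def dl_def chainmap0_def chainmap1_def bdry_def incid_def qvert_def qedge_def insert_Diff_if)

lemma epH_0_1_1: "hrank 0 (EP_space HH posH) (EP_map HH posH) 1 1 = 1"
  by (subst hrank0[where d = "0" and vs = "[0,1,2,3]" and es = "[0,1,2]" and ds = "[0,1,2,3]"]; simp add: vec_def dl_def chainmap0_def chainmap1_def bdry_def incid_def qvert_def qedge_def insert_Diff_if)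

lemma epH_0_1_2: "hrank 0 (EP_space HH posH) (EP_map HH posH) 1 2 = 0"
  by (subst hrank0[where d = "Suc (0)" and vs = "[0,1,2,3]" and es = "[0,1,2]" and ds = "[0,1,2,3]"]; simp add: vec_def dl_def chainmap0_def chainmap1_def bdry_def incid_def qvert_def qedge_def insert_Diff_if)

lemma epH_0_1_3: "hrank 0 (EP_space HH posH) (EP_map HH posH) 1 3 = 0"
  by (subst hrank0[where d = "Suc (Suc (0))" and vs = "[0,1,2,3]" and es = "[]" and ds = "[0,1,2,3]"]; simp add: vec_def dl_def chainmap0_def chainmap1_def bdry_def incid_def qvert_def qedge_def insert_Diff_if)

lemma epH_0_2_2: "hrank 0 (EP_space HH posH) (EP_map HH posH) 2 2 = 0"
  by (subst hrank0[where d = "0" and vs = "[0,1]" and es = "[0,1,2]" and ds = "[0,1,2,3]"]; simp add: vec_def dl_def chainmap0_def chainmap1_def bdry_def incid_def qvert_def qedge_def insert_Diff_if)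

lemma epH_0_2_3: "hrank 0 (EP_space HH posH) (EP_map HH posH) 2 3 = 0"
  by (subst hrank0[where d = "Suc (0)" and vs = "[0,1]" and es = "[]" and ds = "[0,1,2,3]"]; simp add: vec_def dl_def chainmap0_def chainmap1_def bdry_def incid_def qvert_def qedge_def insert_Diff_if)

lemma epH_0_3_3: "hrank 0 (EP_space HH posH) (EP_map HH posH) 3 3 = 0"
  by (subst hrank0[where d = "0" and vs = "[]" and es = "[]" and ds = "[0,1,2,3]"]; simp add: vec_def dl_def chainmap0_def chainmap1_def bdry_def incid_def qvert_def qedge_def insert_Diff_if)

lemma epH_1_0_0: "hrank 1 (EP_space HH posH) (EP_map HH posH) 0 0 = 0"
  by (subst hrank1[where d = "0" and es = "[0]" and vds = "[0,1,2,3]" and ds = "[0,1,2]"]; simp add: vec_def dl_def chainmap0_def chainmap1_def bdry_def incid_def qvert_def qedge_def insert_Diff_if)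

lemma epH_1_0_1: "hrank 1 (EP_space HH posH) (EP_map HH posH) 0 1 = 0"
  by (subst hrank1[where d = "Suc (0)" and es = "[0]" and vds = "[0,1,2,3]" and ds = "[0,1,2]"]; simp add: vec_def dl_def chainmap0_def chainmap1_def bdry_def incid_def qvert_def qedge_def insert_Diff_if)

lemma epH_1_0_2: "hrank 1 (EP_space HH posH) (EP_map HH posH) 0 2 = 0"
  by (subst hrank1[where d = "Suc (Suc (0))" and es = "[0]" and vds = "[0,1,2,3]" and ds = "[0,1,2]"]; simp add: vec_def dl_def chainmap0_def chainmap1_def bdry_def incid_def qvert_def qedge_def insert_Diff_if)

lemma epH_1_0_3: "hrank 1 (EP_space HH posH) (EP_map HH posH) 0 3 = 0"
  by (subst hrank1[where d = "Suc (Suc (Suc (0)))" and es = "[0]" and vds = "[0,1,2,3]" and ds = "[0,1,2]"]; simp add: vec_def dl_def chainmap0_def chainmap1_def bdry_def incid_def qvert_def qedge_def insert_Diff_if)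

lemma epH_1_1_1: "hrank 1 (EP_space HH posH) (EP_map HH posH) 1 1 = 0"
  by (subst hrank1[where d = "0" and es = "[0,1,2]" and vds = "[0,1,2,3]" and ds = "[0,1,2]"]; simp add: vec_def dl_def chainmap0_def chainmap1_def bdry_def incid_def qvert_def qedge_def insert_Diff_if)

lemma epH_1_1_2: "hrank 1 (EP_space HH posH) (EP_map HH posH) 1 2 = 0"
  by (subst hrank1[where d = "Suc (0)" and es = "[0,1,2]" and vds = "[0,1,2,3]" and ds = "[0,1,2]"]; simp add: vec_def dl_def chainmap0_def chainmap1_def bdry_def incid_def qvert_def qedge_def insert_Diff_if)

lemma epH_1_1_3: "hrank 1 (EP_space HH posH) (EP_map HH posH) 1 3 = 0"
  by (subst hrank1[where d = "Suc (Suc (0))" and es = "[0,1,2]" and vds = "[0,1,2,3]" and ds = "[0,1,2]"]; simp add: vec_def dl_def chainmap0_def chainmap1_def bdry_def incid_def qvert_def qedge_def insert_Diff_if)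

lemma epH_1_2_2: "hrank 1 (EP_space HH posH) (EP_map HH posH) 2 2 = 1"
  by (subst hrank1[where d = "0" and es = "[0,1,2]" and vds = "[0,1,2,3]" and ds = "[0,1,2]"]; simp add: vec_def dl_def chainmap0_def chainmap1_def bdry_def incid_def qvert_def qedge_def insert_Diff_if)

lemma epH_1_2_3: "hrank 1 (EP_space HH posH) (EP_map HH posH) 2 3 = 0"
  by (subst hrank1[where d = "Suc (0)" and es = "[0,1,2]" and vds = "[0,1,2,3]" and ds = "[0,1,2]"]; simp add: vec_def dl_def chainmap0_def chainmap1_def bdry_def incid_def qvert_def qedge_def insert_Diff_if)

lemma epH_1_3_3: "hrank 1 (EP_space HH posH) (EP_map HH posH) 3 3 = 0"
  by (subst hrank1[where d = "0" and es = "[]" and vds = "[0,1,2,3]" and ds = "[0,1,2]"]; simp add: vec_def dl_def chainmap0_def chainmap1_def bdry_def incid_def qvert_def qedge_def insert_Diff_if)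

lemma fbG_1_2: "hrank 1 (FB_space GG posG) (FB_map GG posG) 1 2 = 0"
  by (subst hrank1[where d = "Suc (0)" and es = "[0,1]" and vds = "[None,Some 0,Some 1,Some 2]" and ds = "[0,1]"]; simp add: vec_def dl_def chainmap0_def chainmap1_def bdry_def incid_def qvert_def qedge_def insert_Diff_if)

lemma fbG_1_3: "hrank 1 (FB_space GG posG) (FB_map GG posG) 1 3 = 0"
  by (subst hrank1[where d = "Suc (Suc (0))" and es = "[0,1]" and vds = "[None,Some 0,Some 1,Some 2]" and ds = "[0,1]"]; simp add: vec_def dl_def chainmap0_def chainmap1_def bdry_def incid_def qvert_def qedge_def insert_Diff_if)

lemma fbG_2_2: "hrank 1 (FB_space GG posG) (FB_map GG posG) 2 2 = 0"
  by (subst hrank1[where d = "0" and es = "[]" and vds = "[None,Some 0,Some 1,Some 2]" and ds = "[0,1]"]; simp add: vec_def dl_def chainmap0_def chainmap1_def bdry_def incid_def qvert_def qedge_def insert_Diff_if)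

lemma fbG_2_3: "hrank 1 (FB_space GG posG) (FB_map GG posG) 2 3 = 0"
  by (subst hrank1[where d = "Suc (0)" and es = "[]" and vds = "[None,Some 0,Some 1,Some 2]" and ds = "[0,1]"]; simp add: vec_def dl_def chainmap0_def chainmap1_def bdry_def incid_def qvert_def qedge_def insert_Diff_if)

lemma fbH_1_2: "hrank 1 (FB_space HH posH) (FB_map HH posH) 1 2 = 0"
  by (subst hrank1[where d = "Suc (0)" and es = "[0,1,2]" and vds = "[None,Some 0,Some 1,Some 2,Some 3]" and ds = "[0,1,2]"]; simp add: vec_def dl_def chainmap0_def chainmap1_def bdry_def incid_def qvert_def qedge_def insert_Diff_if)

lemma fbH_1_3: "hrank 1 (FB_space HH posH) (FB_map HH posH) 1 3 = 0"
  by (subst hrank1[where d = "Suc (Suc (0))" and es = "[0,1,2]" and vds = "[None,Some 0,Some 1,Some 2,Some 3]" and ds = "[0,1,2]"]; simp add: vec_def dl_def chainmap0_def chainmap1_def bdry_def incid_def qvert_def qedge_def insert_Diff_if)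

lemma fbH_2_2: "hrank 1 (FB_space HH posH) (FB_map HH posH) 2 2 = 1"
  by (subst hrank1[where d = "0" and es = "[0]" and vds = "[None,Some 0,Some 1,Some 2,Some 3]" and ds = "[0,1,2]"]; simp add: vec_def dl_def chainmap0_def chainmap1_def bdry_def incid_def qvert_def qedge_def insert_Diff_if)

lemma fbH_2_3: "hrank 1 (FB_space HH posH) (FB_map HH posH) 2 3 = 0"
  by (subst hrank1[where d = "Suc (0)" and es = "[0]" and vds = "[None,Some 0,Some 1,Some 2,Some 3]" and ds = "[0,1,2]"]; simp add: vec_def dl_def chainmap0_def chainmap1_def bdry_def incid_def qvert_def qedge_def insert_Diff_if)



lemma seg_pair: "p \<in> closed_segment (a1::real, a2::real) (b1, b2) \<longleftrightarrow>
   (\<exists>u. 0 \<le> u \<and> u \<le> 1 \<and> fst p = (1-u)*a1 + u*b1 \<and> snd p = (1-u)*a2 + u*b2)"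
  by (cases p) (auto simp: closed_segment_def)

definition arcsG :: "nat \<Rightarrow> real \<Rightarrow> real \<times> real" where
  "arcsG e = linepath (posG (gsrc GG e)) (posG (gtgt GG e))"
definition arcsH :: "nat \<Rightarrow> real \<Rightarrow> real \<times> real" where
  "arcsH e = linepath (posH (gsrc HH e)) (posH (gtgt HH e))"

lemma embG: "embedding GG posG arcsG"
  unfolding embedding_def wf_graph_def
proof (intro conjI)
  show "inj_on posG (gV GG)" by (auto simp: inj_on_def posG_def)
  show "\<forall>e\<in>gE GG. arc (arcsG e) \<and> pathstart (arcsG e) = posG (gsrc GG e) \<and> pathfinish (arcsG e) = posG (gtgt GG e)"
    by (auto simp: arcsG_def arc_linepath posG_def)
  show "\<forall>e\<in>gE GG. \<forall>v\<in>gV GG. posG v \<in> path_image (arcsG e) \<longrightarrow> v = gsrc GG e \<or> v = gtgt GG e"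
    by (auto simp: arcsG_def posG_def seg_pair)
  show "\<forall>e\<in>gE GG. \<forall>e'\<in>gE GG. e \<noteq> e' \<longrightarrow> path_image (arcsG e) \<inter> path_image (arcsG e') \<subseteq> posG ` gV GG"
  proof (intro ballI impI subsetI)
    fix e e' x assume e: "e \<in> gE GG" "e' \<in> gE GG" "e \<noteq> e'" and x: "x \<in> path_image (arcsG e) \<inter> path_image (arcsG e')"
    have "x = (0,0)" using e x by (auto simp: arcsG_def posG_def seg_pair prod_eq_iff)
    then show "x \<in> posG ` gV GG" by (auto simp: posG_def image_iff intro: bexI[of _ 0])
  qed
qed auto

lemma embH: "embedding HH posH arcsH"
  unfolding embedding_def wf_graph_def
proof (intro conjI)
  show "inj_on posH (gV HH)" by (auto simp: inj_on_def posH_def)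
  show "\<forall>e\<in>gE HH. arc (arcsH e) \<and> pathstart (arcsH e) = posH (gsrc HH e) \<and> pathfinish (arcsH e) = posH (gtgt HH e)"
    by (auto simp: arcsH_def arc_linepath posH_def)
  show "\<forall>e\<in>gE HH. \<forall>v\<in>gV HH. posH v \<in> path_image (arcsH e) \<longrightarrow> v = gsrc HH e \<or> v = gtgt HH e"
    by (auto simp: arcsH_def posH_def seg_pair)
  show "\<forall>e\<in>gE HH. \<forall>e'\<in>gE HH. e \<noteq> e' \<longrightarrow> path_image (arcsH e) \<inter> path_image (arcsH e') \<subseteq> posH ` gV HH"
  proof (intro ballI impI subsetI)
    fix e e' x assume e: "e \<in> gE HH" "e' \<in> gE HH" "e \<noteq> e'" and x: "x \<in> path_image (arcsH e) \<inter> path_image (arcsH e')"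
    have "x = (0,0) \<or> x = (1,0)" using e x by (auto simp: arcsH_def posH_def seg_pair prod_eq_iff)
    then show "x \<in> posH ` gV HH" by (auto simp: posH_def image_iff intro: bexI[of _ 0] bexI[of _ 1])
  qed
qed auto

lemma pd_eq:
  assumes "\<And>i j. i \<le> j \<Longrightarrow> j \<le> N \<Longrightarrow> hrank k sp mp i j = hrank k sp' mp' i j"
  shows "pers_diagram k sp mp N = pers_diagram k sp' mp' N"
proof -
  have r: "rk_ext k sp mp N = rk_ext k sp' mp' N"
  proof (intro ext)
    fix i j :: int
    show "rk_ext k sp mp N i j = rk_ext k sp' mp' N i j"
    proof (cases "0 \<le> i \<and> i \<le> j \<and> j \<le> int N")
      case True
      then have "nat i \<le> nat j" "nat j \<le> N" by auto
      then show ?thesis using True assms by (simp add: rk_ext_def)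
    next
      case False then show ?thesis by (simp only: rk_ext_def if_not_P[OF False] if_False)
    qed
  qed
  show ?thesis unfolding pers_diagram_def by (simp only: r)
qed

lemma four: "(j::nat) \<le> 3 \<Longrightarrow> j = 0 \<or> j = 1 \<or> j = 2 \<or> j = 3" by auto

lemma EP_eq0: "EP_diagram 0 GG posG = EP_diagram 0 HH posH"
  unfolding EP_diagram_def nlev_G nlev_H
  apply (rule pd_eq)
  subgoal for i j using four[of j] four[of i]
    by (auto simp: epG_0_0_0 epG_0_0_0[unfolded One_nat_def] epG_0_0_1 epG_0_0_1[unfolded One_nat_def] epG_0_0_2 epG_0_0_2[unfolded One_nat_def] epG_0_0_3 epG_0_0_3[unfolded One_nat_def] epG_0_1_1 epG_0_1_1[unfolded One_nat_def] epG_0_1_2 epG_0_1_2[unfolded One_nat_def] epG_0_1_3 epG_0_1_3[unfolded One_nat_def] epG_0_2_2 epG_0_2_2[unfolded One_nat_def] epG_0_2_3 epG_0_2_3[unfolded One_nat_def] epG_0_3_3 epG_0_3_3[unfolded One_nat_def] epH_0_0_0 epH_0_0_0[unfolded One_nat_def] epH_0_0_1 epH_0_0_1[unfolded One_nat_def] epH_0_0_2 epH_0_0_2[unfolded One_nat_def] epH_0_0_3 epH_0_0_3[unfolded One_nat_def] epH_0_1_1 epH_0_1_1[unfolded One_nat_def] epH_0_1_2 epH_0_1_2[unfolded One_nat_def] epH_0_1_3 epH_0_1_3[unfolded One_nat_def] epH_0_2_2 epH_0_2_2[unfolded One_nat_def] epH_0_2_3 epH_0_2_3[unfolded One_nat_def]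 epH_0_3_3 epH_0_3_3[unfolded One_nat_def])
  done

lemma EP_eq1: "EP_diagram 1 GG posG = EP_diagram 1 HH posH"
  unfolding EP_diagram_def nlev_G nlev_H
  apply (rule pd_eq)
  subgoal for i j using four[of j] four[of i]
    by (auto simp: epG_1_0_0 epG_1_0_0[unfolded One_nat_def] epG_1_0_1 epG_1_0_1[unfolded One_nat_def] epG_1_0_2 epG_1_0_2[unfolded One_nat_def] epG_1_0_3 epG_1_0_3[unfolded One_nat_def] epG_1_1_1 epG_1_1_1[unfolded One_nat_def] epG_1_1_2 epG_1_1_2[unfolded One_nat_def] epG_1_1_3 epG_1_1_3[unfolded One_nat_def] epG_1_2_2 epG_1_2_2[unfolded One_nat_def] epG_1_2_3 epG_1_2_3[unfolded One_nat_def] epG_1_3_3 epG_1_3_3[unfolded One_nat_def] epH_1_0_0 epH_1_0_0[unfolded One_nat_def] epH_1_0_1 epH_1_0_1[unfolded One_nat_def] epH_1_0_2 epH_1_0_2[unfolded One_nat_def] epH_1_0_3 epH_1_0_3[unfolded One_nat_def] epH_1_1_1 epH_1_1_1[unfolded One_nat_def] epH_1_1_2 epH_1_1_2[unfolded One_nat_def] epH_1_1_3 epH_1_1_3[unfolded One_nat_def] epH_1_2_2 epH_1_2_2[unfolded One_nat_def] epH_1_2_3 epH_1_2_3[unfolded One_nat_def] epH_1_3_3 epH_1_3_3[unfolded One_nat_def])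
  done

lemma FB_G: "FB_diagram 1 GG posG (2,2) = 0"
  unfolding FB_diagram_def pers_diagram_def rk_ext_def nlev_G
  by (simp add: fbG_1_2 fbG_1_2[unfolded One_nat_def] fbG_1_3 fbG_1_3[unfolded One_nat_def] fbG_2_2 fbG_2_2[unfolded One_nat_def] fbG_2_3 fbG_2_3[unfolded One_nat_def])

lemma FB_H: "FB_diagram 1 HH posH (2,2) = 1"
  unfolding FB_diagram_def pers_diagram_def rk_ext_def nlev_H
  by (simp add: fbH_1_2 fbH_1_2[unfolded One_nat_def] fbH_1_3 fbH_1_3[unfolded One_nat_def] fbH_2_2 fbH_2_2[unfolded One_nat_def] fbH_2_3 fbH_2_3[unfolded One_nat_def])

theorem proposition5:
  shows "\<exists>(G :: (nat, nat) graph) posG arcsG (H :: (nat, nat) graph) posH arcsH.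
           embedding G posG arcsG \<and> embedding H posH arcsH \<and>
           (\<exists>k\<in>{0,1}. FB_diagram k G posG \<noteq> FB_diagram k H posH) \<and>
           (\<forall>k\<in>{0,1}. EP_diagram k G posG = EP_diagram k H posH)"
proof (intro exI conjI)
  show "embedding GG posG arcsG" by (rule embG)
  show "embedding HH posH arcsH" by (rule embH)
  show "\<exists>k\<in>{0,1}. FB_diagram k GG posG \<noteq> FB_diagram k HH posH"
  proof (rule bexI[of _ 1])
    show "FB_diagram 1 GG posG \<noteq> FB_diagram 1 HH posH"
    proof
      assume "FB_diagram 1 GG posG = FB_diagram 1 HH posH"
      then have "FB_diagram 1 GG posG (2,2) = FB_diagram 1 HH posH (2,2)" by simp
      then show False using FB_G FB_H by simp
    qed
  qed simp
  show "\<forall>k\<in>{0,1}. EP_diagram k GG posG = EP_diagram k HH posH"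
    using EP_eq0 EP_eq1 by simp
qed

end
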